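(* In the $K$-tier network model described in the context with $W=0$, let tier $k$ use target SINR $\beta_k>0$ and rate $\mathcal R_k=\log_2(1+\beta_k)$, and define $$\mathcal F=\frac{\sum_{k=1}^K\lambda_k\mathcal A_k(1-\mathcal O_k^{int})\mathcal R_k}{\sum_{k=1}^K\lambda_k\mathcal A_k\big(\frac1\eta P_k+M_kP_C\big)+\sum_{k=1}^K\lambda_kP_S}$$ with constants $\eta\in(0,1]$, $P_C>0$, $P_S>0$. Regarded as a function of the access threshold $\epsilon$, $\lim_{\epsilon\to\infty}\mathcal F=0$.
   Context: Network model: $\mathcal K=\{1,\dots,K\}$. In $\mathbb R^2$, tier-$k$ BSs form a homogeneous PPP of intensity $\lambda_k>0$ and users a homogeneous PPP of intensity $\lambda_u>0$, all independent. Tier-$k$ BSs have transmit power $P_k>0$, $M_k\in\mathbb N$ antennas, bias $B_k>0$, path-loss exponent $\alpha_k>2$. $\Omega_k=P_kM_kB_k$, $\delta_k=2/\alpha_k$, $\Omega_{j,k}=\Omega_j/\Omega_k$, $\delta_{j,k}=\delta_j/\delta_k$. Access threshold $\epsilon>0$, $R_k=(\Omega_k/\epsilon)^{1/\alpha_k}$. Association: with $D_k$ the distance from a typical user to its nearest tier-$k$ BS, $\hat\rho_k=\Omega_kD_k^{-\alpha_k}$ if $D_k\le R_k$, else $0$; association with tier $k$ iff $\hat\rho_k>\hat\rho_j$ for all $j\ne k$, with probability $\mathcal T_k=\pi\lambda_k\int_0^{R_k^2}\exp(-\pi\sum_j\lambda_j\Omega_{j,k}^{\delta_j}r^{\delta_{j,k}})dr$.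 Activation probability of tier $j$: $\mathcal A_j=1-\exp\big(-\pi\lambda_u\int_0^{R_j^2}\exp(-\pi\sum_l\lambda_l\Omega_{l,j}^{\delta_l}r^{\delta_{l,j}})dr\big)$; active tier-$j$ BSs are modeled as a homogeneous PPP of intensity $\mathcal A_j\lambda_j$. Outage model: conditional on association with tier $k$, the serving distance $X_k$ has density $\frac{2\pi\lambda_k}{\mathcal T_k}x\exp(-\pi\sum_j\lambda_j\Omega_{j,k}^{\delta_j}x^{2\delta_{j,k}})$ on $(0,R_k]$; given $X_k$, interferers of tier $j$ are the points of independent homogeneous PPPs of intensity $\mathcal A_j\lambda_j$ outside the disk around the user of radius $\Omega_{j,k}^{1/\alpha_j}X_k^{\alpha_k/\alpha_j}$; $\|\mathbf h\|^2\sim\mathrm{Gamma}(M_k,1)$, an interferer of tier $j$ at distance $r$ contributes $P_jVr^{-\alpha_j}$ with $V\sim\mathrm{Exp}(1)$, all independent; $I_o$ is the total interference and $\mathcal O_k^{int}=\mathbb P\{P_k\|\mathbf h\|^2X_k^{-\alpha_k}/I_o<\beta_k\}$. $P_C$ is per-antenna circuit power, $P_S$ static power, $\eta$ amplifier efficiency. *)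

theory Defs
  imports "HOL-Probability.Probability"
begin

record netw =
  K :: nat
  lam :: "nat \<Rightarrow> real"
  lam_u :: real
  Pw :: "nat \<Rightarrow> real"
  Mant :: "nat \<Rightarrow> nat"
  Bias :: "nat \<Rightarrow> real"
  alpha :: "nat \<Rightarrow> real"

definition tiers :: "netw \<Rightarrow> nat set" where
  "tiers N = {1..K N}"

definition Omega :: "netw \<Rightarrow> nat \<Rightarrow> real" where
  "Omega N k = Pw N k * real (Mant N k) * Bias N k"

definition delta :: "netw \<Rightarrow> nat \<Rightarrow> real" where
  "delta N k = 2 / alpha N k"

definition Omega2 :: "netw \<Rightarrow> nat \<Rightarrow> nat \<Rightarrow> real" where
  "Omega2 N j k = Omega N j / Omega N k"

definition delta2 :: "netw \<Rightarrow> nat \<Rightarrow> nat \<Rightarrow> real" where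
  "delta2 N j k = delta N j / delta N k"

definition Racc :: "netw \<Rightarrow> real \<Rightarrow> nat \<Rightarrow> real" where
  "Racc N eps k = (Omega N k / eps) powr (1 / alpha N k)"

definition assoc_exp :: "netw \<Rightarrow> nat \<Rightarrow> real \<Rightarrow> real" where
  "assoc_exp N k r =
     (\<Sum>j\<in>tiers N. lam N j * Omega2 N j k powr delta N j * r powr delta2 N j k)"

definition Tassoc :: "netw \<Rightarrow> real \<Rightarrow> nat \<Rightarrow> real" where
  "Tassoc N eps k = pi * lam N k *
     integral {0..(Racc N eps k)\<^sup>2} (\<lambda>r. exp (- pi * assoc_exp N k r))"

definition Aact :: "netw \<Rightarrow> real \<Rightarrow> nat \<Rightarrow> real" where
  "Aact N eps j = 1 - exp (- pi * lam_u N *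
     integral {0..(Racc N eps j)\<^sup>2} (\<lambda>r. exp (- pi * assoc_exp N j r)))"

text \<open>Density of the serving distance X_k conditional on association with tier k,
  supported on (0, R_k].\<close>
definition serv_density :: "netw \<Rightarrow> real \<Rightarrow> nat \<Rightarrow> real \<Rightarrow> real" where
  "serv_density N eps k x =
     (if 0 < x \<and> x \<le> Racc N eps k then
        2 * pi * lam N k / Tassoc N eps k * x *
        exp (- pi * (\<Sum>j\<in>tiers N. lam N j * Omega2 N j k powr delta N j
                                      * x powr (2 * delta2 N j k)))
      else 0)"

text \<open>Homogeneous PPP of intensity mu on the plane, built from independent annuli
  {n <= |y| < n+1}: in annulus n a Poisson(mu * area) number of points, i.i.d. uniform
  in the annulus, each carrying an independent Exp(1) fading mark.
  A sample is a pair (number of points, sequence of (point, mark)).\<close>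
definition annulus :: "nat \<Rightarrow> (real \<times> real) set" where
  "annulus n = {y. real n \<le> norm y \<and> norm y < real n + 1}"

definition annulus_ppp :: "real \<Rightarrow> nat \<Rightarrow> (nat \<times> (nat \<Rightarrow> (real \<times> real) \<times> real)) measure" where
  "annulus_ppp mu n =
     measure_pmf (poisson_pmf (mu * pi * (2 * real n + 1))) \<Otimes>\<^sub>M
     (\<Pi>\<^sub>M i\<in>(UNIV::nat set).
        uniform_measure lborel (annulus n) \<Otimes>\<^sub>M density lborel (exponential_density 1))"

definition marked_ppp :: "real \<Rightarrow> (nat \<Rightarrow> nat \<times> (nat \<Rightarrow> (real \<times> real) \<times> real)) measure" where
  "marked_ppp mu = (\<Pi>\<^sub>M n\<in>(UNIV::nat set). annulus_ppp mu n)"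

definition active_ppps :: "netw \<Rightarrow> real \<Rightarrow>
    (nat \<Rightarrow> nat \<Rightarrow> nat \<times> (nat \<Rightarrow> (real \<times> real) \<times> real)) measure" where
  "active_ppps N eps = (\<Pi>\<^sub>M j\<in>tiers N. marked_ppp (Aact N eps j * lam N j))"

definition excl_radius :: "netw \<Rightarrow> nat \<Rightarrow> nat \<Rightarrow> real \<Rightarrow> real" where
  "excl_radius N k j x = Omega2 N j k powr (1 / alpha N j) * x powr (alpha N k / alpha N j)"

definition interference :: "netw \<Rightarrow> nat \<Rightarrow> real \<Rightarrow>
    (nat \<Rightarrow> nat \<Rightarrow> nat \<times> (nat \<Rightarrow> (real \<times> real) \<times> real)) \<Rightarrow> ennreal" where
  "interference N k x \<omega> =
     (\<Sum>j\<in>tiers N. \<Sum>n. \<Sum>i<fst (\<omega> j n).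
        (case snd (\<omega> j n) i of (y, v) \<Rightarrow>
           if excl_radius N k j x < norm y
           then ennreal (Pw N j * v * norm y powr (- alpha N j)) else 0))"

text \<open>Joint law of (X_k, |h|^2, interferer configuration): independent, with
  |h|^2 ~ Gamma(M_k,1) = Erlang(M_k - 1 + 1, 1).\<close>
definition outage_space :: "netw \<Rightarrow> real \<Rightarrow> nat \<Rightarrow>
    (real \<times> real \<times> (nat \<Rightarrow> nat \<Rightarrow> nat \<times> (nat \<Rightarrow> (real \<times> real) \<times> real))) measure" where
  "outage_space N eps k =
     density lborel (\<lambda>x. ennreal (serv_density N eps k x)) \<Otimes>\<^sub>M
     (density lborel (erlang_density (Mant N k - 1) 1) \<Otimes>\<^sub>M active_ppps N eps)"

text \<open>Outage probability O_k^int = P{ P_k |h|^2 X_k^(-alpha_k) / I_o < beta_k },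
  written without division: P_k |h|^2 X_k^(-alpha_k) < beta_k I_o.\<close>
definition outage :: "netw \<Rightarrow> (nat \<Rightarrow> real) \<Rightarrow> real \<Rightarrow> nat \<Rightarrow> real" where
  "outage N beta eps k =
     measure (outage_space N eps k)
       {(x, g, \<omega>) \<in> space (outage_space N eps k).
          ennreal (Pw N k * g * x powr (- alpha N k)) < ennreal (beta k) * interference N k x \<omega>}"

definition EE :: "netw \<Rightarrow> (nat \<Rightarrow> real) \<Rightarrow> real \<Rightarrow> real \<Rightarrow> real \<Rightarrow> real \<Rightarrow> real" where
  "EE N beta eta PC PS eps =
     (\<Sum>k\<in>tiers N. lam N k * Aact N eps k * (1 - outage N beta eps k) * log 2 (1 + beta k)) /
     ((\<Sum>k\<in>tiers N. lam N k * Aact N eps k * (Pw N k / eta + real (Mant N k) * PC))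
      + (\<Sum>k\<in>tiers N. lam N k * PS))"

end

theory Submission imports Defs "HOL-Real_Asymp.Real_Asymp" begin


lemma annulus_ball: "ball (real n + 1/2, 0::real) (1/2) \<subseteq> annulus n"
proof
  fix y :: "real \<times> real" assume "y \<in> ball (real n + 1/2, 0) (1/2)"
  hence d: "dist (real n + 1/2, 0) y < 1/2" by simp
  have "norm (real n + 1/2, (0::real)) = real n + 1/2" by (simp add: norm_Pair)
  hence "real n \<le> norm y \<and> norm y < real n + 1"
    using d norm_triangle_ineq2[of "(real n + 1/2, 0::real)" y] norm_triangle_sub[of y "(real n + 1/2, 0::real)"]
    by (auto simp: dist_norm norm_minus_commute)
  thus "y \<in> annulus n" by (simp add: annulus_def)
qed

lemma annulus_sets: "annulus n \<in> sets lborel"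
  unfolding annulus_def by measurable

lemma prob_unif: "prob_space (uniform_measure lborel (annulus n))"
proof (rule prob_space_uniform_measure)
  have "0 < measure lborel (ball (real n + 1/2, 0::real) (1/2))" using content_ball_pos[of "1/2" "(real n + 1/2, 0::real)"] by simp
  hence "emeasure lborel (ball (real n + 1/2, 0::real) (1/2)) \<noteq> 0"
    by (metis emeasure_lborel_ball_finite less_irrefl measure_def enn2real_0 )
  moreover have "emeasure lborel (ball (real n + 1/2, 0::real) (1/2)) \<le> emeasure lborel (annulus n)"
    by (intro emeasure_mono annulus_ball annulus_sets)
  ultimately show "emeasure lborel (annulus n) \<noteq> 0" by (metis le_zero_eq)
  have "bounded (annulus n)"
    unfolding annulus_def bounded_iff by (intro exI[of _ "real n + 1"]) auto
  thus "emeasure lborel (annulus n) \<noteq> \<infinity>" using emeasure_bounded_finite by fastforce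
qed

lemma prob_active: "prob_space (active_ppps N eps)"
  unfolding active_ppps_def marked_ppp_def annulus_ppp_def
  by (intro prob_space_PiM prob_space_pair prob_space_measure_pmf prob_unif prob_space_exponential_density) auto



definition Hyp :: "netw \<Rightarrow> bool" where
 "Hyp N = (\<forall>j\<in>tiers N. lam N j > 0 \<and> Pw N j > 0 \<and> Mant N j \<ge> 1 \<and> Bias N j > 0 \<and> alpha N j > 2)"

definition Ssum :: "netw \<Rightarrow> nat \<Rightarrow> real" where
 "Ssum N k = (\<Sum>j\<in>tiers N. lam N j * Omega2 N j k powr delta N j)"

lemma Omega_pos: "Hyp N \<Longrightarrow> j \<in> tiers N \<Longrightarrow> Omega N j > 0"
  unfolding Hyp_def Omega_def by auto

lemma delta2_pos: "Hyp N \<Longrightarrow> j \<in> tiers N \<Longrightarrow> k \<in> tiers N \<Longrightarrow> delta2 N j k > 0"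
proof -
  assume "Hyp N" "j \<in> tiers N" "k \<in> tiers N"
  hence "alpha N j > 0" "alpha N k > 0" unfolding Hyp_def by auto
  thus ?thesis unfolding delta2_def delta_def by simp
qed

lemma assoc_nonneg: "Hyp N \<Longrightarrow> k \<in> tiers N \<Longrightarrow> 0 \<le> assoc_exp N k r"
  unfolding assoc_exp_def Hyp_def
  by (intro sum_nonneg) (auto intro!: mult_nonneg_nonneg)

lemma powr_le1': "0 \<le> (r::real) \<Longrightarrow> r \<le> 1 \<Longrightarrow> p > 0 \<Longrightarrow> r powr p \<le> 1"
  by (metis order.order_iff_strict powr01_less_one powr_eq_0_iff powr_one_eq_one)

lemma assoc_le: assumes "Hyp N" "k \<in> tiers N" "0 \<le> r" "r \<le> 1"
  shows "assoc_exp N k r \<le> Ssum N k"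
  unfolding assoc_exp_def Ssum_def
proof (intro sum_mono)
  fix j assume j: "j \<in> tiers N"
  have "r powr delta2 N j k \<le> 1" using powr_le1' assms delta2_pos[OF assms(1) j assms(2)] by auto
  moreover have "0 \<le> lam N j * Omega2 N j k powr delta N j" using assms(1) j unfolding Hyp_def by auto
  ultimately show "lam N j * Omega2 N j k powr delta N j * r powr delta2 N j k \<le> lam N j * Omega2 N j k powr delta N j"
    by (simp add: mult_left_le)
qed

lemma cont_integrand: assumes "Hyp N" "k \<in> tiers N"
  shows "continuous_on {0..} (\<lambda>r. exp (- pi * assoc_exp N k r))"
  unfolding assoc_exp_def
  using delta2_pos[OF assms(1) _ assms(2)]
  by (intro continuous_intros continuous_on_powr') auto

lemma integral_bounds: assumes "Hyp N" "k \<in> tiers N" "0 \<le> X" "X \<le> 1"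
  shows "X * exp (- pi * Ssum N k) \<le> integral {0..X} (\<lambda>r. exp (- pi * assoc_exp N k r))"
    and "integral {0..X} (\<lambda>r. exp (- pi * assoc_exp N k r)) \<le> X"
proof -
  have int: "(\<lambda>r. exp (- pi * assoc_exp N k r)) integrable_on {0..X}"
    by (rule integrable_continuous_interval) (rule continuous_on_subset[OF cont_integrand[OF assms(1,2)]], auto)
  have "integral {0..X} (\<lambda>r. exp (- pi * Ssum N k)) \<le> integral {0..X} (\<lambda>r. exp (- pi * assoc_exp N k r))"
    using int assoc_le[OF assms(1,2)] assms(4) by (intro integral_le) auto
  thus "X * exp (- pi * Ssum N k) \<le> integral {0..X} (\<lambda>r. exp (- pi * assoc_exp N k r))"
    using assms(3) by simp
  have "integral {0..X} (\<lambda>r. exp (- pi * assoc_exp N k r)) \<le> integral {0..X} (\<lambda>r. 1::real)"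
    using int assoc_nonneg[OF assms(1,2)] by (intro integral_le) auto
  thus "integral {0..X} (\<lambda>r. exp (- pi * assoc_exp N k r)) \<le> X" using assms(3) by simp
qed

lemma Racc_pos: "Hyp N \<Longrightarrow> k \<in> tiers N \<Longrightarrow> eps > 0 \<Longrightarrow> Racc N eps k > 0"
  unfolding Racc_def using Omega_pos[of N k] by auto

lemma Aact_bounds: assumes "Hyp N" "k \<in> tiers N" "eps > 0" "(Racc N eps k)\<^sup>2 \<le> 1" "lam_u N > 0"
  shows "0 \<le> Aact N eps k" "Aact N eps k \<le> pi * lam_u N * (Racc N eps k)\<^sup>2"
proof -
  note ib = integral_bounds[OF assms(1,2) _ assms(4)]
  have X: "0 \<le> (Racc N eps k)\<^sup>2" by simp
  define I where "I = integral {0..(Racc N eps k)\<^sup>2} (\<lambda>r. exp (- pi * assoc_exp N k r))"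
  have I0: "0 \<le> I" unfolding I_def using ib(1)[OF X] X by (smt (verit) exp_gt_zero mult_nonneg_nonneg)
  have I1: "I \<le> (Racc N eps k)\<^sup>2" unfolding I_def using ib(2)[OF X] .
  have A: "Aact N eps k = 1 - exp (- (pi * lam_u N * I))" unfolding Aact_def I_def by simp
  have "0 \<le> pi * lam_u N * I" using I0 assms(5) by simp
  thus "0 \<le> Aact N eps k" unfolding A by simp
  have "1 - exp (- (pi * lam_u N * I)) \<le> pi * lam_u N * I" by (smt (verit) exp_ge_add_one_self)
  also have "\<dots> \<le> pi * lam_u N * (Racc N eps k)\<^sup>2" using I1 assms(5) by simp
  finally show "Aact N eps k \<le> pi * lam_u N * (Racc N eps k)\<^sup>2" unfolding A .
qed

lemma Tassoc_lower: assumes "Hyp N" "k \<in> tiers N" "eps > 0" "(Racc N eps k)\<^sup>2 \<le> 1"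
  shows "pi * lam N k * (Racc N eps k)\<^sup>2 * exp (- pi * Ssum N k) \<le> Tassoc N eps k"
proof -
  have "lam N k > 0" using assms unfolding Hyp_def by auto
  thus ?thesis unfolding Tassoc_def
    using integral_bounds(1)[OF assms(1,2) _ assms(4)] by (simp add: mult.assoc)
qed

lemma serv_mass: assumes "Hyp N" "k \<in> tiers N" "eps > 0" "(Racc N eps k)\<^sup>2 \<le> 1"
  shows "emeasure (density lborel (\<lambda>x. ennreal (serv_density N eps k x))) UNIV
           \<le> ennreal (2 * exp (pi * Ssum N k))"
proof -
  define R where "R = Racc N eps k"
  define T where "T = Tassoc N eps k"
  define E where "E = exp (- pi * Ssum N k)"
  have R0: "R > 0" unfolding R_def using Racc_pos assms by auto
  have lam: "lam N k > 0" using assms unfolding Hyp_def by auto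
  have TL: "pi * lam N k * R\<^sup>2 * E \<le> T" unfolding R_def T_def E_def using Tassoc_lower assms by auto
  have E0: "E > 0" unfolding E_def by simp
  have low0: "pi * lam N k * R\<^sup>2 * E > 0" using R0 lam E0 by simp
  hence T0: "T > 0" using TL by linarith
  define c where "c = 2 * pi * lam N k / T"
  have c0: "c \<ge> 0" unfolding c_def using T0 lam by simp
  have pt: "ennreal (serv_density N eps k x) \<le> ennreal (c * R) * indicator {0..R} x" for x
  proof (cases "0 < x \<and> x \<le> R")
    case True
    have ex: "exp (- pi * (\<Sum>j\<in>tiers N. lam N j * Omega2 N j k powr delta N j
                                      * x powr (2 * delta2 N j k))) \<le> 1"
    proof -
      have "0 \<le> (\<Sum>j\<in>tiers N. lam N j * Omega2 N j k powr delta N j * x powr (2 * delta2 N j k))"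
        using assms(1) unfolding Hyp_def by (intro sum_nonneg) (auto intro!: mult_nonneg_nonneg)
      thus ?thesis by simp
    qed
    have "serv_density N eps k x = c * x * exp (- pi * (\<Sum>j\<in>tiers N. lam N j * Omega2 N j k powr delta N j
                                      * x powr (2 * delta2 N j k)))"
      unfolding serv_density_def c_def T_def using True R_def by simp
    also have "\<dots> \<le> c * R * 1"
      using True c0 ex by (intro mult_mono) (auto intro!: mult_left_mono)
    finally have "serv_density N eps k x \<le> c * R" by simp
    thus ?thesis using True by (simp add: indicator_def ennreal_leI)
  next
    case False
    hence "serv_density N eps k x = 0" unfolding serv_density_def R_def by auto
    thus ?thesis by simp
  qed
  have meas: "(\<lambda>x. ennreal (serv_density N eps k x)) \<in> borel_measurable lborel"
    unfolding serv_density_def by measurable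
  have "emeasure (density lborel (\<lambda>x. ennreal (serv_density N eps k x))) UNIV
        = (\<integral>\<^sup>+x. ennreal (serv_density N eps k x) \<partial>lborel)"
    using meas by (simp add: emeasure_density)
  also have "\<dots> \<le> (\<integral>\<^sup>+x. ennreal (c * R) * indicator {0..R} x \<partial>lborel)"
    by (intro nn_integral_mono pt)
  also have "\<dots> = ennreal (c * R) * emeasure lborel {0..R}"
    by (simp add: nn_integral_cmult_indicator)
  also have "\<dots> = ennreal (c * R * R)" using R0 c0 by (simp add: ennreal_mult)
  also have "\<dots> \<le> ennreal (2 * exp (pi * Ssum N k))"
  proof (intro ennreal_leI)
    have "c * R * R = 2 * pi * lam N k * R\<^sup>2 / T" unfolding c_def by (simp add: power2_eq_square)
    also have "\<dots> \<le> 2 * pi * lam N k * R\<^sup>2 / (pi * lam N k * R\<^sup>2 * E)"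
      using TL low0 lam R0 by (intro divide_left_mono) auto
    also have "\<dots> = 2 / E" using lam R0 by (simp add: field_simps)
    also have "\<dots> = 2 * exp (pi * Ssum N k)" unfolding E_def by (simp add: exp_minus field_simps)
    finally show "c * R * R \<le> 2 * exp (pi * Ssum N k)" .
  qed
  finally show ?thesis .
qed

lemma outage_bound: assumes "Hyp N" "k \<in> tiers N" "eps > 0" "(Racc N eps k)\<^sup>2 \<le> 1"
  shows "0 \<le> outage N beta eps k" "outage N beta eps k \<le> 2 * exp (pi * Ssum N k)"
proof -
  show "0 \<le> outage N beta eps k" unfolding outage_def by simp
  define D where "D = density lborel (\<lambda>x. ennreal (serv_density N eps k x))"
  define P where "P = density lborel (erlang_density (Mant N k - 1) 1) \<Otimes>\<^sub>M active_ppps N eps"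
  have "prob_space P" unfolding P_def
    by (intro prob_space_pair prob_space_erlang_density prob_active) auto
  then interpret P: prob_space P .
  have sp: "space (outage_space N eps k) = space D \<times> space P"
    unfolding outage_space_def D_def P_def by (simp add: space_pair_measure)
  have "emeasure (outage_space N eps k) (space (outage_space N eps k)) = emeasure D (space D) * emeasure P (space P)"
    unfolding sp unfolding outage_space_def D_def[symmetric] P_def[symmetric]
    by (intro P.emeasure_pair_measure_Times) auto
  also have "\<dots> = emeasure D UNIV" by (simp add: P.emeasure_space_1 D_def)
  also have "\<dots> \<le> ennreal (2 * exp (pi * Ssum N k))" unfolding D_def by (rule serv_mass[OF assms])
  finally have tot: "emeasure (outage_space N eps k) (space (outage_space N eps k)) \<le> ennreal (2 * exp (pi * Ssum N k))" .
  define A where "A = {(x, g, \<omega>) \<in> space (outage_space N eps k).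
          ennreal (Pw N k * g * x powr (- alpha N k)) < ennreal (beta k) * interference N k x \<omega>}"
  have "measure (outage_space N eps k) A \<le> 2 * exp (pi * Ssum N k)"
  proof (cases "A \<in> sets (outage_space N eps k)")
    case True
    have "emeasure (outage_space N eps k) A \<le> ennreal (2 * exp (pi * Ssum N k))"
      using emeasure_space[of "outage_space N eps k" A] tot by (metis order_trans)
    thus ?thesis unfolding measure_def by (simp add: enn2real_leI)
  next
    case False thus ?thesis by (simp add: measure_notin_sets)
  qed
  thus "outage N beta eps k \<le> 2 * exp (pi * Ssum N k)" unfolding outage_def A_def .
qed

lemma Racc_lim: "Hyp N \<Longrightarrow> k \<in> tiers N \<Longrightarrow> ((\<lambda>eps. (Racc N eps k)\<^sup>2) \<longlongrightarrow> 0) at_top"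
proof -
  assume h: "Hyp N" "k \<in> tiers N"
  have "Omega N k > 0" "1 / alpha N k > 0" using Omega_pos[OF h] h unfolding Hyp_def by auto
  moreover have "\<And>(c::real) p. c > 0 \<Longrightarrow> p > 0 \<Longrightarrow> ((\<lambda>e. ((c/e) powr p)^2) \<longlongrightarrow> 0) at_top"
    by real_asymp
  ultimately show ?thesis unfolding Racc_def by blast
qed

theorem proposition2:
  fixes N :: netw and beta :: "nat \<Rightarrow> real" and eta PC PS :: real
  assumes "K N \<ge> 1"
    and "\<forall>k\<in>tiers N. lam N k > 0 \<and> Pw N k > 0 \<and> Mant N k \<ge> 1 \<and> Bias N k > 0
                      \<and> alpha N k > 2 \<and> beta k > 0"
    and "lam_u N > 0"
    and "0 < eta" and "eta \<le> 1" and "PC > 0" and "PS > 0"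
  shows "((\<lambda>eps. EE N beta eta PC PS eps) \<longlongrightarrow> 0) at_top"
proof -
  have H: "Hyp N" using assms(2) unfolding Hyp_def by auto
  have fin: "finite (tiers N)" unfolding tiers_def by simp
  have ne: "1 \<in> tiers N" using assms(1) unfolding tiers_def by simp
  define D0 where "D0 = (\<Sum>k\<in>tiers N. lam N k * PS)"
  have D0: "D0 > 0" unfolding D0_def using fin ne assms(2,7)
    by (intro sum_pos) auto
  define C where "C k = 1 + 2 * exp (pi * Ssum N k)" for k
  define L where "L k = log 2 (1 + beta k)" for k
  define g where "g eps = (\<Sum>k\<in>tiers N. lam N k * (pi * lam_u N * (Racc N eps k)\<^sup>2) * C k * L k) / D0" for eps
  have "(g \<longlongrightarrow> (\<Sum>k\<in>tiers N. lam N k * (pi * lam_u N * 0) * C k * L k) / D0) at_top"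
    unfolding g_def using D0 by (intro tendsto_intros Racc_lim[OF H]) auto
  hence glim: "(g \<longlongrightarrow> 0) at_top" using D0 by simp
  have ev1: "eventually (\<lambda>eps. \<forall>k\<in>tiers N. (Racc N eps k)\<^sup>2 < 1) at_top"
    using fin by (intro eventually_ball_finite ballI order_tendstoD(2)[OF Racc_lim[OF H]]) auto
  have ev: "eventually (\<lambda>eps. eps > 0 \<and> (\<forall>k\<in>tiers N. (Racc N eps k)\<^sup>2 < 1)) at_top"
    using ev1 eventually_gt_at_top[of 0] by eventually_elim auto
  have "eventually (\<lambda>eps. norm (EE N beta eta PC PS eps) \<le> g eps) at_top"
    using ev
  proof eventually_elim
    case (elim eps)
    hence e0: "eps > 0" and R1: "\<And>k. k \<in> tiers N \<Longrightarrow> (Racc N eps k)\<^sup>2 \<le> 1" by auto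
    define num where "num = (\<Sum>k\<in>tiers N. lam N k * Aact N eps k * (1 - outage N beta eps k) * log 2 (1 + beta k))"
    define den where "den = (\<Sum>k\<in>tiers N. lam N k * Aact N eps k * (Pw N k / eta + real (Mant N k) * PC))
      + (\<Sum>k\<in>tiers N. lam N k * PS)"
    have "(\<Sum>k\<in>tiers N. lam N k * Aact N eps k * (Pw N k / eta + real (Mant N k) * PC)) \<ge> 0"
      using Aact_bounds(1)[OF H _ e0 R1 assms(3)] assms(2,4,6)
      by (intro sum_nonneg) (auto intro!: mult_nonneg_nonneg add_nonneg_nonneg)
    hence den: "den \<ge> D0" unfolding den_def D0_def by linarith
    have "\<bar>num\<bar> \<le> (\<Sum>k\<in>tiers N. \<bar>lam N k * Aact N eps k * (1 - outage N beta eps k) * log 2 (1 + beta k)\<bar>)"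
      unfolding num_def by (rule sum_abs)
    also have "\<dots> \<le> (\<Sum>k\<in>tiers N. lam N k * (pi * lam_u N * (Racc N eps k)\<^sup>2) * C k * L k)"
    proof (intro sum_mono)
      fix k assume k: "k \<in> tiers N"
      have l: "lam N k > 0" and b: "beta k > 0" using assms(2) k by auto
      have Lp: "L k > 0" unfolding L_def using b by simp
      have A0: "0 \<le> Aact N eps k" and A1: "Aact N eps k \<le> pi * lam_u N * (Racc N eps k)\<^sup>2"
        using Aact_bounds[OF H k e0 R1[OF k] assms(3)] by auto
      have o: "\<bar>1 - outage N beta eps k\<bar> \<le> C k"
        using outage_bound[OF H k e0 R1[OF k], of beta] unfolding C_def by linarith
      have "\<bar>lam N k * Aact N eps k * (1 - outage N beta eps k) * log 2 (1 + beta k)\<bar>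
          = lam N k * Aact N eps k * \<bar>1 - outage N beta eps k\<bar> * L k"
        using l A0 Lp unfolding L_def by (simp add: abs_mult)
      also have "\<dots> \<le> lam N k * (pi * lam_u N * (Racc N eps k)\<^sup>2) * C k * L k"
        using l A0 A1 o Lp by (intro mult_right_mono mult_mono) auto
      finally show "\<bar>lam N k * Aact N eps k * (1 - outage N beta eps k) * log 2 (1 + beta k)\<bar>
          \<le> lam N k * (pi * lam_u N * (Racc N eps k)\<^sup>2) * C k * L k" .
    qed
    finally have nb: "\<bar>num\<bar> \<le> (\<Sum>k\<in>tiers N. lam N k * (pi * lam_u N * (Racc N eps k)\<^sup>2) * C k * L k)" .
    have "norm (EE N beta eta PC PS eps) = \<bar>num\<bar> / den"
      unfolding EE_def num_def[symmetric] den_def[symmetric] using den D0 by simp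
    also have "\<dots> \<le> \<bar>num\<bar> / D0" using den D0 by (intro divide_left_mono) auto
    also have "\<dots> \<le> g eps" unfolding g_def using nb D0 by (intro divide_right_mono) auto
    finally show ?case .
  qed
  thus ?thesis using glim by (rule Lim_null_comparison)
qed

end
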